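(* Let $\gamma, c_1, c_2 > 0$ be real numbers. There exist $\alpha_0 > 0$ and $N_0$, depending only on $\gamma, c_1, c_2$, such that the following holds. Let $N \ge N_0$, let $Q = N^\gamma$, let $X \subseteq [N]$ be a set of integers, and suppose there is a set of primes $P \subseteq \mathcal{P}(Q)$ with $w(P) \ge c_1 \log Q$ such that for every $p \in P$ there are at least $c_2|X|$ elements of $X$ lying in at most $\alpha p$ residue classes modulo $p$, where $0 < \alpha \le \alpha_0$ is independent of $p$. Then $|X| < Q$.
   Context: $[N] = \{0,1,\ldots,N\}$. $\mathcal{P}(Q)$ denotes the set of primes $p \le Q$, and for a finite set of primes $P$, $w(P) := \sum_{p \in P} \frac{\log p}{p}$. *)

theory Defs
  imports Complex_Main "HOL-Computational_Algebra.Primes"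
begin

definition wP :: "nat set \<Rightarrow> real" where
  "wP P = (\<Sum>p\<in>P. ln (real p) / real p)"

end

theory Submission
  imports Defs "HOL-Analysis.Analysis"
begin

lemma prod_primes_dvd:
  "finite S \<Longrightarrow> (\<forall>p\<in>S. prime p \<and> p dvd (d::nat)) \<Longrightarrow> \<Prod>S dvd d"
proof (induction S rule: finite_induct)
  case empty then show ?case by simp
next
  case (insert q S)
  then have h: "\<Prod>S dvd d" "q dvd d" "prime q" by auto
  have "coprime q (\<Prod>S)"
  proof (rule ccontr)
    assume "\<not> coprime q (\<Prod>S)"
    then have "q dvd \<Prod>S" using h(3) prime_imp_coprime by blast
    then obtain r where "r \<in> S" "q dvd r" using prime_dvd_prod_iff[OF insert(1) h(3)] by auto
    then show False using insert by (metis insert_iff primes_dvd_imp_eq)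
  qed
  then have "q * \<Prod>S dvd d" using h by (simp add: divides_mult)
  then show ?case using insert by simp
qed

lemma sum_ln_le:
  assumes "finite S" "\<forall>p\<in>S. prime p \<and> p dvd d" "d > (0::nat)"
  shows "(\<Sum>p\<in>S. ln (real p)) \<le> ln (real d)"
proof -
  have pos: "\<forall>p\<in>S. real p > 0" using assms(2) prime_gt_0_nat by auto
  have "(\<Sum>p\<in>S. ln (real p)) = ln (\<Prod>p\<in>S. real p)" using ln_prod[OF assms(1)] pos by auto
  also have "\<dots> = ln (real (\<Prod>S))" by simp
  also have "\<dots> \<le> ln (real d)"
  proof -
    have a: "\<Prod>S \<le> d" using prod_primes_dvd[OF assms(1,2)] assms(3) by (simp add: dvd_imp_le)
    have b: "\<Prod>S > 0" using pos by (simp add: prod_pos)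
    show ?thesis proof -
      have "real (\<Prod>S) > 0" "real (\<Prod>S) \<le> real d" using a b by (simp_all only: of_nat_le_iff of_nat_0_less_iff)
      then show ?thesis by (subst ln_le_cancel_iff) auto
    qed
  qed
  finally show ?thesis .
qed

lemma pair_bound:
  assumes "finite P" "\<forall>p\<in>P. prime p" "x \<le> N" "y \<le> N" "x \<noteq> (y::nat)"
  shows "(\<Sum>p\<in>{p\<in>P. x mod p = y mod p}. ln (real p)) \<le> ln (real N)"
proof -
  define d where "d = (if x < y then y - x else x - y)"
  have d0: "d > 0" "d \<le> N" using assms(3-5) by (auto simp: d_def)
  have "\<forall>p\<in>{p\<in>P. x mod p = y mod p}. prime p \<and> p dvd d"
    using assms(2) mod_eq_dvd_iff_nat[of x y] mod_eq_dvd_iff_nat[of y x] by (auto simp: d_def eq_commute)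
  then have "(\<Sum>p\<in>{p\<in>P. x mod p = y mod p}. ln (real p)) \<le> ln (real d)"
    using sum_ln_le assms(1) d0 by auto
  also have "\<dots> \<le> ln (real N)" using d0 by simp
  finally show ?thesis .
qed

lemma cs_bound:
  fixes f :: "nat \<Rightarrow> nat"
  assumes "finite Y" "finite R" "f ` Y \<subseteq> R"
  shows "real (card Y)^2 \<le> real (card R) * real (card {z\<in>Y\<times>Y. f (fst z) = f (snd z)})"
proof -
  define F where "F r = {x\<in>Y. f x = r}" for r
  have "real (card Y) = (\<Sum>x\<in>Y. 1)" by simp
  also have "\<dots> = (\<Sum>r\<in>R. \<Sum>x\<in>F r. 1)"
    unfolding F_def using sum.group[OF assms(1) assms(2) assms(3), of "\<lambda>_. (1::real)"] by simp
  also have "\<dots> = (\<Sum>r\<in>R. real (card (F r)))" by simp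
  finally have e1: "real (card Y) = (\<Sum>r\<in>R. real (card (F r)))" .
  have fin2: "finite {z\<in>Y\<times>Y. f (fst z) = f (snd z)}" using assms(1) by auto
  have "real (card {z\<in>Y\<times>Y. f (fst z) = f (snd z)}) = (\<Sum>z\<in>{z\<in>Y\<times>Y. f (fst z) = f (snd z)}. 1)" by simp
  also have "\<dots> = (\<Sum>r\<in>R. \<Sum>z\<in>{z\<in>{z\<in>Y\<times>Y. f (fst z) = f (snd z)}. f (fst z) = r}. 1)"
    using sum.group[OF fin2 assms(2), of "\<lambda>z. f (fst z)" "\<lambda>_. (1::real)"] assms(3) by force
  also have "\<dots> = (\<Sum>r\<in>R. real (card (F r))^2)"
  proof (rule sum.cong)
    fix r assume "r \<in> R"
    have "{z\<in>{z\<in>Y\<times>Y. f (fst z) = f (snd z)}. f (fst z) = r} = F r \<times> F r"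
      by (auto simp: F_def)
    then show "(\<Sum>z\<in>{z\<in>{z\<in>Y\<times>Y. f (fst z) = f (snd z)}. f (fst z) = r}. 1) = real (card (F r))^2"
      by (simp add: card_cartesian_product power2_eq_square)
  qed simp
  finally have e2: "real (card {z\<in>Y\<times>Y. f (fst z) = f (snd z)}) = (\<Sum>r\<in>R. real (card (F r))^2)" .
  show ?thesis unfolding e1 e2
    using sum_squared_le_sum_of_squares[of "\<lambda>r. real (card (F r))" R] by (simp add: mult.commute)
qed

lemma double_count:
  assumes "finite P" "\<forall>p\<in>P. prime p" "X \<subseteq> {0..N}"
  shows "(\<Sum>p\<in>P. ln (real p) * real (card {z\<in>X\<times>X. fst z \<noteq> snd z \<and> fst z mod p = snd z mod p}))
         \<le> real (card X)^2 * ln (real N)"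
proof -
  define Off where "Off = {z\<in>X\<times>X. fst z \<noteq> snd z}"
  have finX: "finite X" using assms(3) finite_subset by blast
  have finO: "finite Off" using finX by (simp add: Off_def)
  have "(\<Sum>p\<in>P. ln (real p) * real (card {z\<in>X\<times>X. fst z \<noteq> snd z \<and> fst z mod p = snd z mod p}))
      = (\<Sum>p\<in>P. \<Sum>z\<in>Off. if fst z mod p = snd z mod p then ln (real p) else 0)"
  proof (rule sum.cong)
    fix p assume "p \<in> P"
    have "{z\<in>X\<times>X. fst z \<noteq> snd z \<and> fst z mod p = snd z mod p} = {z\<in>Off. fst z mod p = snd z mod p}"
      by (auto simp: Off_def)
    then show "ln (real p) * real (card {z\<in>X\<times>X. fst z \<noteq> snd z \<and> fst z mod p = snd z mod p})
      = (\<Sum>z\<in>Off. if fst z mod p = snd z mod p then ln (real p) else 0)"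
      using finO by (simp add: sum.inter_filter[symmetric])
  qed simp
  also have "\<dots> = (\<Sum>z\<in>Off. \<Sum>p\<in>P. if fst z mod p = snd z mod p then ln (real p) else 0)"
    by (rule sum.swap)
  also have "\<dots> = (\<Sum>z\<in>Off. \<Sum>p\<in>{p\<in>P. fst z mod p = snd z mod p}. ln (real p))"
    using assms(1) by (simp add: sum.inter_filter[symmetric])
  also have "\<dots> \<le> (\<Sum>z\<in>Off. ln (real N))"
  proof (rule sum_mono)
    fix z assume "z \<in> Off"
    then show "(\<Sum>p\<in>{p\<in>P. fst z mod p = snd z mod p}. ln (real p)) \<le> ln (real N)"
      using pair_bound[OF assms(1,2), of "fst z" N "snd z"] assms(3) by (auto simp: Off_def subset_iff)
  qed
  also have "\<dots> = real (card Off) * ln (real N)" by simp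
  also have "\<dots> \<le> real (card X)^2 * ln (real N)"
  proof -
    have "card Off \<le> card (X \<times> X)" using finX unfolding Off_def by (intro card_mono) auto
    then have "real (card Off) \<le> real (card X)^2" by (simp add: card_cartesian_product power2_eq_square flip: of_nat_mult)
    moreover have "ln (real N) \<ge> 0" by (cases "N = 0") auto
    ultimately show ?thesis by (simp add: mult_right_mono)
  qed
  finally show ?thesis .
qed

lemma main_bound:
  fixes \<gamma> c1 c2 \<alpha> :: real
  assumes g: "\<gamma> > 0" and c1: "c1 > 0" and c2: "c2 > 0" and N2: "N \<ge> (2::nat)"
    and XN: "X \<subseteq> {0..N}"
    and PQ: "P \<subseteq> {p. prime p \<and> real p \<le> real N powr \<gamma>}"
    and wPb: "wP P \<ge> c1 * ln (real N powr \<gamma>)"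
    and a0: "0 < \<alpha>" and a1: "\<alpha> \<le> c2^2*c1*\<gamma>/(2*(1+\<gamma>))"
    and H: "\<forall>p\<in>P. \<exists>R :: nat set. R \<subseteq> {..<p} \<and> real (card R) \<le> \<alpha> * real p \<and>
                real (card {x\<in>X. x mod p \<in> R}) \<ge> c2 * real (card X)"
  shows "real (card X) < real N powr \<gamma>"
proof (rule ccontr)
  define Q where "Q = real N powr \<gamma>"
  define n where "n = real (card X)"
  define L where "L = ln (real N)"
  assume "\<not> real (card X) < real N powr \<gamma>"
  then have nQ: "Q \<le> n" by (simp add: Q_def n_def)
  have L0: "L > 0" using N2 by (simp add: L_def)
  have lnQ: "ln Q = \<gamma> * L" using N2 by (simp add: Q_def L_def ln_powr)
  have Q0: "Q > 0" using N2 by (simp add: Q_def)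
  have n0: "n > 0" using nQ Q0 by linarith
  have finX: "finite X" using XN finite_subset by blast
  have Psub: "P \<subseteq> {1..nat \<lfloor>Q\<rfloor>}"
  proof
    fix p assume "p \<in> P"
    then have "prime p" "real p \<le> Q" using PQ by (auto simp: Q_def)
    then show "p \<in> {1..nat \<lfloor>Q\<rfloor>}"
      using prime_ge_1_nat[of p] by (auto simp: le_nat_floor le_floor_iff)
  qed
  have finP: "finite P" using Psub finite_subset by blast
  have primeP: "\<forall>p\<in>P. prime p" using PQ by auto
  have cardP: "real (card P) \<le> Q"
  proof -
    have "card P \<le> nat \<lfloor>Q\<rfloor>" using card_mono[OF _ Psub] by simp
    then have "real (card P) \<le> real (nat \<lfloor>Q\<rfloor>)" by simp
    also have "\<dots> \<le> Q" using Q0 by linarith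
    finally show ?thesis .
  qed
  have lnp: "ln (real p) \<le> \<gamma> * L" "ln (real p) \<ge> 0" if "p \<in> P" for p
  proof -
    have "prime p" "real p \<le> Q" using PQ that by (auto simp: Q_def)
    then have "real p > 0" "real p \<ge> 1" using prime_gt_0_nat prime_ge_1_nat by auto
    then show "ln (real p) \<ge> 0" by simp
    have "ln (real p) \<le> ln Q" using \<open>real p > 0\<close> \<open>real p \<le> Q\<close> by simp
    then show "ln (real p) \<le> \<gamma> * L" using lnQ by simp
  qed
  define Off where "Off p = {z\<in>X\<times>X. fst z \<noteq> snd z \<and> fst z mod p = snd z mod p}" for p :: nat
  have perp: "ln (real p) * (c2^2*n^2/(\<alpha>*real p) - n) \<le> ln (real p) * real (card (Off p))"
    if pP: "p \<in> P" for p
  proof -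
    obtain R where R: "R \<subseteq> {..<p}" "real (card R) \<le> \<alpha> * real p"
      "real (card {x\<in>X. x mod p \<in> R}) \<ge> c2 * n"
      using H pP by (auto simp: n_def)
    define Y where "Y = {x\<in>X. x mod p \<in> R}"
    define C where "C = card {z\<in>X\<times>X. fst z mod p = snd z mod p}"
    have p0: "real p > 0" using primeP pP prime_gt_0_nat by auto
    have finR: "finite R" using R(1) finite_subset by blast
    have finY: "finite Y" using finX by (simp add: Y_def)
    have cs: "real (card Y)^2 \<le> real (card R) * real (card {z\<in>Y\<times>Y. fst z mod p = snd z mod p})"
      using cs_bound[OF finY finR, of "\<lambda>x. x mod p"] by (auto simp: Y_def)
    have "card {z\<in>Y\<times>Y. fst z mod p = snd z mod p} \<le> C"
      unfolding C_def using finX by (intro card_mono) (auto simp: Y_def)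
    then have "real (card R) * real (card {z\<in>Y\<times>Y. fst z mod p = snd z mod p}) \<le> (\<alpha> * real p) * real C"
      using R(2) by (intro mult_mono) auto
    with cs have "real (card Y)^2 \<le> (\<alpha> * real p) * real C" by linarith
    moreover have "(c2*n)^2 \<le> real (card Y)^2"
      using R(3) c2 n0 by (intro power_mono) (auto simp: Y_def)
    ultimately have "(c2*n)^2 \<le> (\<alpha> * real p) * real C" by linarith
    then have A: "c2^2*n^2/(\<alpha>*real p) \<le> real C" using a0 p0
      by (simp add: divide_le_eq power_mult_distrib mult.commute)
    have "{z\<in>X\<times>X. fst z mod p = snd z mod p} \<subseteq> Off p \<union> (\<lambda>x. (x,x)) ` X"
      by (auto simp: Off_def)
    then have "C \<le> card (Off p \<union> (\<lambda>x. (x,x)) ` X)"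
      unfolding C_def using finX by (intro card_mono) (auto simp: Off_def)
    also have "\<dots> \<le> card (Off p) + card ((\<lambda>x. (x,x)) ` X)" by (rule card_Un_le)
    also have "\<dots> \<le> card (Off p) + card X" using card_image_le[OF finX] by simp
    finally have "real C \<le> real (card (Off p)) + n" unfolding n_def by linarith
    with A have "c2^2*n^2/(\<alpha>*real p) - n \<le> real (card (Off p))" by linarith
    then show ?thesis using lnp(2)[OF pP] by (rule mult_left_mono)
  qed
  have "(\<Sum>p\<in>P. ln (real p) * (c2^2*n^2/(\<alpha>*real p) - n)) \<le> (\<Sum>p\<in>P. ln (real p) * real (card (Off p)))"
    using perp by (rule sum_mono)
  also have "\<dots> \<le> n^2 * L"
    using double_count[OF finP primeP XN] by (simp add: Off_def n_def L_def)
  finally have S1: "(\<Sum>p\<in>P. ln (real p) * (c2^2*n^2/(\<alpha>*real p) - n)) \<le> n^2 * L" .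
  have "(\<Sum>p\<in>P. ln (real p) * (c2^2*n^2/(\<alpha>*real p) - n))
      = (c2^2*n^2/\<alpha>) * wP P - n * (\<Sum>p\<in>P. ln (real p))"
  proof -
    have t: "ln (real p) * (c2^2*n^2/(\<alpha>*real p) - n) = (c2^2*n^2/\<alpha>) * (ln (real p) / real p) - n * ln (real p)" for p
      by (simp add: right_diff_distrib)
    show ?thesis unfolding wP_def t by (simp add: sum_subtractf sum_distrib_left)
  qed
  with S1 have S2: "(c2^2*n^2/\<alpha>) * wP P - n * (\<Sum>p\<in>P. ln (real p)) \<le> n^2 * L" by simp
  have "(\<Sum>p\<in>P. ln (real p)) \<le> real (card P) * (\<gamma> * L)"
    using lnp(1) by (rule sum_bounded_above)
  also have "\<dots> \<le> Q * (\<gamma> * L)" using cardP g L0 by (intro mult_right_mono) auto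
  also have "\<dots> \<le> n * (\<gamma> * L)" using nQ g L0 by (intro mult_right_mono) auto
  finally have sl: "(\<Sum>p\<in>P. ln (real p)) \<le> n * (\<gamma> * L)" .
  have wl: "wP P \<ge> c1 * (\<gamma> * L)" using wPb lnQ by (simp add: Q_def L_def)
  define K where "K = c2^2*c1*\<gamma>/\<alpha>"
  have K: "K \<ge> 2*(1+\<gamma>)" using a1 a0 g unfolding K_def by (simp add: le_divide_eq pos_divide_le_eq mult.commute)
  define m where "m = n^2 * L"
  have m0: "m > 0" using n0 L0 by (simp add: m_def)
  have e1: "(c2^2*n^2/\<alpha>) * (c1 * (\<gamma> * L)) = K * m" by (simp add: K_def m_def field_simps)
  have "(c2^2*n^2/\<alpha>) * (c1 * (\<gamma> * L)) \<le> (c2^2*n^2/\<alpha>) * wP P"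
    using wl a0 by (intro mult_left_mono) auto
  moreover have "n * (\<Sum>p\<in>P. ln (real p)) \<le> n * (n * (\<gamma> * L))" using sl n0 by (intro mult_left_mono) auto
  ultimately have "K * m - \<gamma> * m \<le> m" using S2 e1 by (simp add: m_def power2_eq_square algebra_simps)
  moreover have "2*(1+\<gamma>) * m \<le> K * m" using K m0 by (intro mult_right_mono) auto
  ultimately have "2*(1+\<gamma>)*m - \<gamma>*m \<le> m" by linarith
  then have "m + \<gamma>*m \<le> 0" by (simp add: algebra_simps)
  moreover have "\<gamma>*m > 0" using g m0 by simp
  ultimately show False using m0 by linarith
qed

theorem lemma3p1:
  fixes \<gamma> c1 c2 :: real
  assumes "\<gamma> > 0" "c1 > 0" "c2 > 0"
  shows "\<exists>\<alpha>0 > 0. \<exists>N0 :: nat. \<forall>N \<ge> N0. \<forall>(X :: nat set) (P :: nat set) (\<alpha> :: real).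
           X \<subseteq> {0..N} \<longrightarrow>
           P \<subseteq> {p. prime p \<and> real p \<le> real N powr \<gamma>} \<longrightarrow>
           wP P \<ge> c1 * ln (real N powr \<gamma>) \<longrightarrow>
           0 < \<alpha> \<longrightarrow> \<alpha> \<le> \<alpha>0 \<longrightarrow>
           (\<forall>p\<in>P. \<exists>R :: nat set. R \<subseteq> {..<p} \<and> real (card R) \<le> \<alpha> * real p \<and>
                real (card {x\<in>X. x mod p \<in> R}) \<ge> c2 * real (card X)) \<longrightarrow>
           real (card X) < real N powr \<gamma>"
proof (intro exI[of _ "c2^2*c1*\<gamma>/(2*(1+\<gamma>))"] conjI exI[of _ "2::nat"] allI impI)
  show "c2^2*c1*\<gamma>/(2*(1+\<gamma>)) > 0" using assms by simp
next
  fix N :: nat and X P :: "nat set" and \<alpha> :: real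
  assume "2 \<le> N" "X \<subseteq> {0..N}" "P \<subseteq> {p. prime p \<and> real p \<le> real N powr \<gamma>}"
    "wP P \<ge> c1 * ln (real N powr \<gamma>)" "0 < \<alpha>" "\<alpha> \<le> c2^2*c1*\<gamma>/(2*(1+\<gamma>))"
    "\<forall>p\<in>P. \<exists>R :: nat set. R \<subseteq> {..<p} \<and> real (card R) \<le> \<alpha> * real p \<and>
                real (card {x\<in>X. x mod p \<in> R}) \<ge> c2 * real (card X)"
  then show "real (card X) < real N powr \<gamma>" using main_bound[OF assms] by blast
qed

end
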